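(* Let $X$ be a finite $s$-regular graph with vertex set $X^0$ and let $\lambda_2$ be the second largest eigenvalue of its adjacency matrix. Let $0<\alpha$, let $S\subset X^0$ with $|S|\le\alpha|X^0|$, let $0<b\le s$, and let $$A=\{v\in S : |(\delta S)_v|\ge s-b\},$$ where $(\delta S)_v=\delta S\cap\delta v$. Put $\beta=\big((b-\lambda_2)-\alpha(s-\lambda_2)\big)b^{-1}$. Then $|A|\ge\beta|S|$.
   Context: For a vertex $v$, $\delta v$ is the set of edges incident to $v$. For $S\subset X^0$, $\delta S$ denotes the set of edges with one endpoint in $S$ and the other in $X^0\setminus S$. *)

theory Defs
  imports "Jordan_Normal_Form.Char_Poly" "HOL-Library.Multiset"
begin

definition simple_graph :: "nat \<Rightarrow> (nat \<Rightarrow> nat \<Rightarrow> bool) \<Rightarrow> bool" where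
  "simple_graph n E \<longleftrightarrow> (\<forall>u v. E u v \<longrightarrow> u < n \<and> v < n) \<and>
                          (\<forall>u v. E u v \<longrightarrow> E v u) \<and> (\<forall>v. \<not> E v v)"

definition regular_graph :: "nat \<Rightarrow> (nat \<Rightarrow> nat \<Rightarrow> bool) \<Rightarrow> nat \<Rightarrow> bool" where
  "regular_graph n E s \<longleftrightarrow> simple_graph n E \<and> (\<forall>v<n. card {w. w < n \<and> E v w} = s)"

definition graph_edges :: "nat \<Rightarrow> (nat \<Rightarrow> nat \<Rightarrow> bool) \<Rightarrow> nat set set" where
  "graph_edges n E = {{u, w} | u w. u < n \<and> w < n \<and> E u w}"

definition delta_vertex :: "nat \<Rightarrow> (nat \<Rightarrow> nat \<Rightarrow> bool) \<Rightarrow> nat \<Rightarrow> nat set set" where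
  "delta_vertex n E v = {e \<in> graph_edges n E. v \<in> e}"

definition delta_set :: "nat \<Rightarrow> (nat \<Rightarrow> nat \<Rightarrow> bool) \<Rightarrow> nat set \<Rightarrow> nat set set" where
  "delta_set n E S = {e \<in> graph_edges n E. \<exists>u w. e = {u, w} \<and> u \<in> S \<and> w \<in> {0..<n} - S}"

definition adj_matrix :: "nat \<Rightarrow> (nat \<Rightarrow> nat \<Rightarrow> bool) \<Rightarrow> real mat" where
  "adj_matrix n E = mat n n (\<lambda>(i, j). if E i j then 1 else 0)"

(* eigenvalues of the adjacency matrix (with multiplicity), in non-increasing order;
   they are the roots of the characteristic polynomial (all real, since the matrix is symmetric) *)
definition adj_eigenvalues_desc :: "nat \<Rightarrow> (nat \<Rightarrow> nat \<Rightarrow> bool) \<Rightarrow> real list" where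
  "adj_eigenvalues_desc n E = rev (sorted_list_of_multiset (proots (char_poly (adj_matrix n E))))"

definition lambda2 :: "nat \<Rightarrow> (nat \<Rightarrow> nat \<Rightarrow> bool) \<Rightarrow> real" where
  "lambda2 n E = adj_eigenvalues_desc n E ! 1"

end

theory Submission
  imports Defs
begin


definition qf :: "nat \<Rightarrow> (nat \<Rightarrow> nat \<Rightarrow> real) \<Rightarrow> (nat \<Rightarrow> real) \<Rightarrow> real" where
  "qf n F y = (\<Sum>i<n. \<Sum>j<n. F i j * y i * y j)"
definition nrm :: "nat \<Rightarrow> (nat \<Rightarrow> real) \<Rightarrow> real" where
  "nrm n y = (\<Sum>i<n. (y i)^2)"
definition bil :: "nat \<Rightarrow> (nat \<Rightarrow> nat \<Rightarrow> real) \<Rightarrow> (nat \<Rightarrow> real) \<Rightarrow> (nat \<Rightarrow> real) \<Rightarrow> real" where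
  "bil n F u v = (\<Sum>i<n. \<Sum>j<n. u i * F i j * v j)"

lemma cs_quad:
  fixes a b c :: real
  assumes h: "\<forall>r. 0 \<le> a + 2*r*b + r^2*c" and c: "0 \<le> c"
  shows "b^2 \<le> a*c"
proof (cases "c = 0")
  case True
  have "b = 0"
  proof (rule ccontr)
    assume "b \<noteq> 0"
    have "0 \<le> a + 2*(-(a+1)/(2*b))*b + (-(a+1)/(2*b))^2*c" using h by blast
    with True \<open>b \<noteq> 0\<close> show False by (simp add: field_simps)
  qed
  then show ?thesis using True by simp
next
  case False
  with c have cp: "c > 0" by simp
  have "0 \<le> a + 2*(-b/c)*b + (-b/c)^2*c" using h by blast
  hence "0 \<le> a - b^2/c" using cp by (simp add: field_simps power2_eq_square)
  hence "b^2/c \<le> a" by simp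
  thus ?thesis using cp by (simp add: field_simps mult.commute)
qed

lemma nrm_nonneg: "0 \<le> nrm n y" unfolding nrm_def by (intro sum_nonneg) auto

lemma nrm_zero: "nrm n y = 0 \<Longrightarrow> i < n \<Longrightarrow> y i = 0"
  unfolding nrm_def by (subst (asm) sum_nonneg_eq_0_iff) auto

lemma nrm_ge: "i < n \<Longrightarrow> (y i)^2 \<le> nrm n y"
  unfolding nrm_def by (rule member_le_sum) auto

lemma qf_zero: "nrm n y = 0 \<Longrightarrow> qf n F y = 0"
  unfolding qf_def using nrm_zero by (auto intro!: sum.neutral)

lemma qf_scale: "qf n F (\<lambda>i. c * y i) = c^2 * qf n F y"
  unfolding qf_def by (simp add: sum_distrib_left power2_eq_square algebra_simps)

lemma nrm_scale: "nrm n (\<lambda>i. c * y i) = c^2 * nrm n y"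
  unfolding nrm_def by (simp add: sum_distrib_left power2_eq_square algebra_simps)

lemma qf_bound:
  assumes "nrm n y = 1"
  shows "qf n F y \<le> (\<Sum>i<n. \<Sum>j<n. \<bar>F i j\<bar>)"
  unfolding qf_def
proof (intro sum_mono)
  fix i j assume i: "i \<in> {..<n}" and j: "j \<in> {..<n}"
  have "(y i)^2 \<le> 1" "(y j)^2 \<le> 1" using nrm_ge[of i n y] nrm_ge[of j n y] i j assms by auto
  hence "\<bar>y i\<bar> \<le> 1" "\<bar>y j\<bar> \<le> 1" by (simp_all add: abs_square_le_1)
  hence "\<bar>y i * y j\<bar> \<le> 1" by (simp add: abs_mult mult_le_one)
  hence "F i j * (y i * y j) \<le> \<bar>F i j\<bar>"
    by (metis abs_ge_self abs_mult abs_ge_zero mult_left_le order_trans)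
  thus "F i j * y i * y j \<le> \<bar>F i j\<bar>" by (simp add: mult.assoc)
qed



lemma bil_swap:
  assumes sym: "\<And>i j. i < n \<Longrightarrow> j < n \<Longrightarrow> M i j = M j i"
  shows "bil n M v u = bil n M u v"
  unfolding bil_def
  by (subst sum.swap) (auto intro!: sum.cong simp: sym mult.commute mult.left_commute)

lemma bil_expand:
  assumes sym: "\<And>i j. i < n \<Longrightarrow> j < n \<Longrightarrow> M i j = M j i"
  shows "bil n M (\<lambda>i. u i + r * v i) (\<lambda>i. u i + r * v i)
       = bil n M u u + 2*r*bil n M u v + r^2 * bil n M v v"
proof -
  have "bil n M (\<lambda>i. u i + r * v i) (\<lambda>i. u i + r * v i)
      = bil n M u u + r * bil n M v u + r * bil n M u v + r^2 * bil n M v v"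
    unfolding bil_def
    by (simp add: algebra_simps sum.distrib sum_distrib_left power2_eq_square)
  thus ?thesis using bil_swap[OF sym] by simp
qed

lemma bil_qf: "bil n M y y = qf n M y"
  unfolding bil_def qf_def by (simp add: mult.commute mult.left_commute)

lemma bil_diff: "bil n (\<lambda>i j. A i j - B i j) u v = bil n A u v - bil n B u v"
  unfolding bil_def by (simp add: algebra_simps sum_subtractf)

lemma bil_shift: "bil n (\<lambda>i j. (if i = j then L else 0) - F i j) y y = L * nrm n y - qf n F y"
proof -
  have "bil n (\<lambda>i j. (if i = j then L else 0)) y y = (\<Sum>i<n. \<Sum>j<n. (if i = j then y i * L * y j else 0))"
    unfolding bil_def by (intro sum.cong refl) auto
  also have "\<dots> = L * nrm n y"
    unfolding nrm_def by (simp add: sum_distrib_left power2_eq_square algebra_simps)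
  finally show ?thesis by (simp add: bil_diff bil_qf)
qed



lemma prod_bound: "i < n \<Longrightarrow> k < n \<Longrightarrow> \<bar>y i * y k\<bar> \<le> nrm n y"
proof -
  assume "i < n" "k < n"
  hence a: "(y i)^2 \<le> nrm n y" "(y k)^2 \<le> nrm n y" by (auto intro: nrm_ge)
  have "0 \<le> (\<bar>y i\<bar> - \<bar>y k\<bar>)^2" by simp
  hence "2 * (\<bar>y i\<bar> * \<bar>y k\<bar>) \<le> \<bar>y i\<bar>^2 + \<bar>y k\<bar>^2" by (simp add: power2_diff)
  hence "2 * \<bar>y i * y k\<bar> \<le> (y i)^2 + (y k)^2" by (simp add: abs_mult)
  thus ?thesis using a by linarith
qed

lemma inv_exists:
  assumes "det (mat n n (\<lambda>(i,j). M i j)) \<noteq> (0::real)"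
  shows "\<exists>N. N \<in> carrier_mat n n \<and> mat n n (\<lambda>(i,j). M i j) * N = 1\<^sub>m n"
proof -
  have "mat n n (\<lambda>(i,j). M i j) \<in> Units (ring_mat TYPE(real) n ())"
    by (rule det_non_zero_imp_unit[OF _ assms]) auto
  thus ?thesis unfolding Units_def ring_mat_def by auto
qed

lemma claimR:
  fixes F :: "nat \<Rightarrow> nat \<Rightarrow> real"
  assumes sym: "\<And>i j. i < n \<Longrightarrow> j < n \<Longrightarrow> F i j = F j i"
    and x: "qf n F x > t * nrm n x"
  shows "\<exists>\<mu>>t. det (mat n n (\<lambda>(i,j). (if i = j then \<mu> else 0) - F i j)) = 0"
proof -
  define Q where "Q = {qf n F y | y. nrm n y = 1}"
  define L where "L = Sup Q"
  have nx: "nrm n x > 0"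
  proof (rule ccontr)
    assume "\<not> ?thesis"
    hence "nrm n x = 0" using nrm_nonneg[of n x] by linarith
    thus False using x qf_zero[of n x F] by simp
  qed
  define z where "z = (\<lambda>i. (1 / sqrt (nrm n x)) * x i)"
  have nz: "nrm n z = 1" unfolding z_def nrm_scale using nx by (simp add: power_divide)
  have qz: "qf n F z = qf n F x / nrm n x" unfolding z_def qf_scale using nx by (simp add: power_divide)
  have Qne: "Q \<noteq> {}" using nz unfolding Q_def by blast
  have bdd: "bdd_above Q" unfolding Q_def bdd_above_def using qf_bound by blast
  have "qf n F z \<in> Q" using nz unfolding Q_def by blast
  hence "qf n F z \<le> L" unfolding L_def using bdd by (rule cSup_upper)
  moreover have "qf n F z > t" unfolding qz using x nx by (simp add: pos_less_divide_eq)
  ultimately have Lt: "L > t" by linarith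
  have qle: "qf n F y \<le> L * nrm n y" for y
  proof (cases "nrm n y = 0")
    case True thus ?thesis using qf_zero by simp
  next
    case False
    hence ny: "nrm n y > 0" using nrm_nonneg[of n y] by linarith
    define w where "w = (\<lambda>i. (1 / sqrt (nrm n y)) * y i)"
    have nw: "nrm n w = 1" unfolding w_def nrm_scale using ny by (simp add: power_divide)
    have qw: "qf n F w = qf n F y / nrm n y" unfolding w_def qf_scale using ny by (simp add: power_divide)
    have "qf n F w \<in> Q" using nw unfolding Q_def by blast
    hence "qf n F w \<le> L" unfolding L_def using bdd by (rule cSup_upper)
    thus ?thesis using qw ny by (simp add: field_simps)
  qed
  define Mf where "Mf = (\<lambda>i j. (if i = j then L else 0) - F i j)"
  have symM: "\<And>i j. i < n \<Longrightarrow> j < n \<Longrightarrow> Mf i j = Mf j i" unfolding Mf_def using sym by auto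
  have psd: "bil n Mf y y \<ge> 0" for y unfolding Mf_def bil_shift using qle[of y] by simp
  have "det (mat n n (\<lambda>(i,j). Mf i j)) = 0"
  proof (rule ccontr)
    assume "det (mat n n (\<lambda>(i,j). Mf i j)) \<noteq> 0"
    from inv_exists[OF this] obtain N where N: "N \<in> carrier_mat n n"
      and MN: "mat n n (\<lambda>(i,j). Mf i j) * N = 1\<^sub>m n" by blast
    have MNe: "(\<Sum>j<n. Mf i j * N $$ (j,k)) = (if i = k then 1 else 0)" if "i < n" "k < n" for i k
    proof -
      have "(mat n n (\<lambda>(i,j). Mf i j) * N) $$ (i,k) = (1\<^sub>m n :: real mat) $$ (i,k)" using MN by simp
      thus ?thesis using N that by (simp add: scalar_prod_def lessThan_atLeast0)
    qed
    define K where "K = (\<Sum>i<n. \<Sum>k<n. \<bar>N $$ (i,k)\<bar>) + 1"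
    have "(\<Sum>i<n. \<Sum>k<n. \<bar>N $$ (i,k)\<bar>) \<ge> 0" by (intro sum_nonneg) auto
    hence Kpos: "K > 0" unfolding K_def by linarith
    have key: "qf n F y \<le> (L - 1/K) * nrm n y" for y
    proof (cases "nrm n y = 0")
      case True thus ?thesis using qf_zero by simp
    next
      case False
      hence ny: "nrm n y > 0" using nrm_nonneg[of n y] by linarith
      define u where "u = (\<lambda>i. \<Sum>k<n. N $$ (i,k) * y k)"
      have Mu: "(\<Sum>j<n. Mf i j * u j) = y i" if "i < n" for i
      proof -
        have "(\<Sum>j<n. Mf i j * u j) = (\<Sum>j<n. \<Sum>k<n. Mf i j * N $$ (j,k) * y k)"
          unfolding u_def by (simp add: sum_distrib_left mult.assoc)
        also have "\<dots> = (\<Sum>k<n. \<Sum>j<n. Mf i j * N $$ (j,k) * y k)" by (rule sum.swap)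
        also have "\<dots> = (\<Sum>k<n. (\<Sum>j<n. Mf i j * N $$ (j,k)) * y k)" by (simp add: sum_distrib_right)
        also have "\<dots> = (\<Sum>k<n. (if i = k then y k else 0))"
          using MNe that by (intro sum.cong) auto
        also have "\<dots> = y i" using that by simp
        finally show ?thesis .
      qed
      have b1: "bil n Mf u y = nrm n y"
      proof -
        have "bil n Mf u y = bil n Mf y u" using bil_swap[OF symM] by simp
        also have "\<dots> = (\<Sum>i<n. y i * (\<Sum>j<n. Mf i j * u j))"
          unfolding bil_def by (simp add: sum_distrib_left mult.assoc)
        also have "\<dots> = nrm n y" unfolding nrm_def using Mu by (simp add: power2_eq_square)
        finally show ?thesis .
      qed
      have b2: "bil n Mf u u \<le> (K - 1) * nrm n y"
      proof -
        have "bil n Mf u u = (\<Sum>i<n. u i * (\<Sum>j<n. Mf i j * u j))"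
          unfolding bil_def by (simp add: sum_distrib_left mult.assoc)
        also have "\<dots> = (\<Sum>i<n. u i * y i)" using Mu by (intro sum.cong) auto
        also have "\<dots> = (\<Sum>i<n. \<Sum>k<n. N $$ (i,k) * (y i * y k))"
          unfolding u_def sum_distrib_right by (simp add: mult_ac)
        also have "\<dots> \<le> (\<Sum>i<n. \<Sum>k<n. \<bar>N $$ (i,k)\<bar> * nrm n y)"
        proof (intro sum_mono)
          fix i k assume "i \<in> {..<n}" "k \<in> {..<n}"
          hence "\<bar>y i * y k\<bar> \<le> nrm n y" using prod_bound by auto
          hence "\<bar>N $$ (i,k) * (y i * y k)\<bar> \<le> \<bar>N $$ (i,k)\<bar> * nrm n y"
            by (simp add: abs_mult mult_left_mono)
          thus "N $$ (i,k) * (y i * y k) \<le> \<bar>N $$ (i,k)\<bar> * nrm n y" by linarith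
        qed
        also have "\<dots> = (K - 1) * nrm n y" unfolding K_def by (simp add: sum_distrib_right)
        finally show ?thesis .
      qed
      have "\<forall>r. 0 \<le> bil n Mf u u + 2*r*bil n Mf u y + r^2*bil n Mf y y"
      proof
        fix r
        show "0 \<le> bil n Mf u u + 2*r*bil n Mf u y + r^2*bil n Mf y y"
          using psd[of "\<lambda>i. u i + r * y i"] bil_expand[OF symM, where u=u and r=r and v=y] by simp
      qed
      from cs_quad[OF this psd] b1
      have "(nrm n y)^2 \<le> bil n Mf u u * bil n Mf y y" by simp
      also have "\<dots> \<le> (K - 1) * nrm n y * bil n Mf y y" using b2 psd by (rule mult_right_mono)
      also have "\<dots> \<le> K * nrm n y * bil n Mf y y" using psd ny by (simp add: mult_right_mono)
      finally have "nrm n y * nrm n y \<le> nrm n y * (K * bil n Mf y y)" by (simp add: power2_eq_square mult_ac)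
      hence "nrm n y \<le> K * bil n Mf y y" using ny mult_le_cancel_left_pos by blast
      hence "nrm n y / K \<le> bil n Mf y y" using Kpos by (simp add: field_simps)
      thus ?thesis unfolding Mf_def bil_shift by (simp add: field_simps)
    qed
    have "Sup Q \<le> L - 1/K"
    proof (rule cSup_least[OF Qne])
      fix q assume "q \<in> Q"
      then obtain y where "nrm n y = 1" "q = qf n F y" unfolding Q_def by blast
      thus "q \<le> L - 1/K" using key[of y] by simp
    qed
    thus False using Kpos unfolding L_def[symmetric] by simp
  qed
  thus ?thesis using Lt unfolding Mf_def by blast
qed



lemma char_poly_eval:
  "poly (char_poly (mat n n (\<lambda>(i,j). F i j))) \<mu> = det (mat n n (\<lambda>(i,j). (if i = j then \<mu> else 0) - F i j))"
  unfolding char_poly_def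
  by (rule poly_det_cong[of _ n]) (auto simp: char_poly_matrix_def)

definition Dm :: "nat \<Rightarrow> (nat \<Rightarrow> nat \<Rightarrow> real) \<Rightarrow> real \<Rightarrow> real \<Rightarrow> real mat" where
  "Dm n F \<mu> c = mat n n (\<lambda>(i,j). (if i = j then \<mu> else 0) - F i j + c)"
definition Wm :: "nat \<Rightarrow> real mat" where
  "Wm n = mat n n (\<lambda>(i,j). if j = 0 then 1 else if i = j then 1 else 0)"
definition Gm :: "nat \<Rightarrow> (nat \<Rightarrow> nat \<Rightarrow> real) \<Rightarrow> real \<Rightarrow> real mat" where
  "Gm n F \<mu> = mat n n (\<lambda>(i,j). if j = 0 then 1 else (if i = j then \<mu> else 0) - F i j)"
definition Tm :: "nat \<Rightarrow> real \<Rightarrow> real \<Rightarrow> real mat" where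
  "Tm n a c = mat n n (\<lambda>(i,j). if i = 0 then (if j = 0 then a else c) else if i = j then 1 else 0)"

lemma DW_GT:
  fixes s :: real
  assumes n: "n > 0" and rs: "\<And>i. i < n \<Longrightarrow> (\<Sum>j<n. F i j) = s"
  shows "Dm n F \<mu> c * Wm n = Gm n F \<mu> * Tm n (\<mu> - s + c * n) c"
proof (rule eq_matI)
  fix i j assume i: "i < dim_row (Gm n F \<mu> * Tm n (\<mu> - s + c * n) c)"
    and j: "j < dim_col (Gm n F \<mu> * Tm n (\<mu> - s + c * n) c)"
  hence i: "i < n" and j: "j < n" by (auto simp: Gm_def Tm_def)
  have L: "(Dm n F \<mu> c * Wm n) $$ (i,j) = (\<Sum>k<n. ((if i = k then \<mu> else 0) - F i k + c) * (if j = 0 then 1 else if k = j then 1 else 0))"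
    using i j by (simp add: Dm_def Wm_def scalar_prod_def lessThan_atLeast0)
  have R: "(Gm n F \<mu> * Tm n (\<mu> - s + c * n) c) $$ (i,j) = (\<Sum>k<n. (if k = 0 then 1 else (if i = k then \<mu> else 0) - F i k) * (if k = 0 then (if j = 0 then \<mu> - s + c * n else c) else if k = j then 1 else 0))"
    using i j by (simp add: Gm_def Tm_def scalar_prod_def lessThan_atLeast0)
  show "(Dm n F \<mu> c * Wm n) $$ (i,j) = (Gm n F \<mu> * Tm n (\<mu> - s + c * n) c) $$ (i,j)"
  proof (cases "j = 0")
    case True
    have "(\<Sum>k<n. ((if i = k then \<mu> else 0) - F i k + c)) = (\<Sum>k<n. (if i = k then \<mu> else 0)) - (\<Sum>k<n. F i k) + (\<Sum>k<n. c)"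
      by (simp add: sum.distrib sum_subtractf)
    also have "\<dots> = \<mu> - s + c * n" using i rs by simp
    finally have l: "(\<Sum>k<n. ((if i = k then \<mu> else 0) - F i k + c)) = \<mu> - s + c * n" .
    have "(\<Sum>k<n. (if k = 0 then 1 else (if i = k then \<mu> else 0) - F i k) * (if k = 0 then (if j = 0 then \<mu> - s + c * n else c) else if k = j then 1 else 0))
       = (\<Sum>k<n. if k = 0 then \<mu> - s + c * n else 0)" using True by (intro sum.cong) auto
    also have "\<dots> = \<mu> - s + c * n" using n by simp
    finally show ?thesis using L R l True by simp
  next
    case False
    have "(\<Sum>k<n. ((if i = k then \<mu> else 0) - F i k + c) * (if j = 0 then 1 else if k = j then 1 else 0))
       = (\<Sum>k<n. if k = j then ((if i = k then \<mu> else 0) - F i k + c) else 0)" using False by (intro sum.cong) auto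
    also have "\<dots> = (if i = j then \<mu> else 0) - F i j + c" using j by simp
    finally have l: "(\<Sum>k<n. ((if i = k then \<mu> else 0) - F i k + c) * (if j = 0 then 1 else if k = j then 1 else 0)) = (if i = j then \<mu> else 0) - F i j + c" .
    have "(\<Sum>k<n. (if k = 0 then 1 else (if i = k then \<mu> else 0) - F i k) * (if k = 0 then (if j = 0 then \<mu> - s + c * n else c) else if k = j then 1 else 0))
       = (\<Sum>k<n. (if k = 0 then c else 0) + (if k = j then (if i = k then \<mu> else 0) - F i k else 0))" using False by (intro sum.cong) auto
    also have "\<dots> = c + ((if i = j then \<mu> else 0) - F i j)" using j n by (simp add: sum.distrib)
    finally show ?thesis using L R l by simp
  qed
qed (auto simp: Dm_def Wm_def Gm_def Tm_def)

lemma det_Wm: "det (Wm n) = 1"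
proof -
  have "det (Wm n) = prod_list (diag_mat (Wm n))"
    by (rule det_lower_triangular[of n]) (auto simp: Wm_def)
  also have "\<dots> = 1" unfolding prod_list_diag_prod by (intro prod.neutral) (auto simp: Wm_def)
  finally show ?thesis .
qed

lemma det_Tm: assumes "n > 0" shows "det (Tm n a c) = a"
proof -
  have "det (Tm n a c) = prod_list (diag_mat (Tm n a c))"
    by (rule det_upper_triangular[of _ n]) (auto simp: Tm_def)
  also have "\<dots> = (\<Prod>i = 0..<n. if i = 0 then a else 1)" unfolding prod_list_diag_prod
    by (intro prod.cong) (auto simp: Tm_def)
  also have "\<dots> = a" using assms by (simp add: prod.delta)
  finally show ?thesis .
qed

lemma det_Dm:
  fixes s :: real
  assumes n: "n > 0" and rs: "\<And>i. i < n \<Longrightarrow> (\<Sum>j<n. F i j) = s"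
  shows "det (Dm n F \<mu> c) = det (Gm n F \<mu>) * (\<mu> - s + c * n)"
proof -
  have "det (Dm n F \<mu> c * Wm n) = det (Gm n F \<mu> * Tm n (\<mu> - s + c * n) c)" using DW_GT[OF n rs] by simp
  hence "det (Dm n F \<mu> c) * det (Wm n) = det (Gm n F \<mu>) * det (Tm n (\<mu> - s + c * n) c)"
    by (subst (asm) (1 2) det_mult[of _ n]) (auto simp: Dm_def Wm_def Gm_def Tm_def)
  thus ?thesis using det_Wm det_Tm[OF n] by simp
qed

lemma det_identity:
  fixes s :: real
  assumes n: "n > 0" and rs: "\<And>i. i < n \<Longrightarrow> (\<Sum>j<n. F i j) = s"
  shows "det (mat n n (\<lambda>(i,j). (if i = j then \<mu> else 0) - (F i j - c))) * (\<mu> - s)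
       = det (mat n n (\<lambda>(i,j). (if i = j then \<mu> else 0) - F i j)) * (\<mu> - s + c * n)"
proof -
  have e1: "mat n n (\<lambda>(i,j). (if i = j then \<mu> else 0) - (F i j - c)) = Dm n F \<mu> c"
    unfolding Dm_def by (intro cong_mat) auto
  have e2: "mat n n (\<lambda>(i,j). (if i = j then \<mu> else 0) - F i j) = Dm n F \<mu> 0"
    unfolding Dm_def by (intro cong_mat) auto
  have "det (Dm n F \<mu> c) = det (Gm n F \<mu>) * (\<mu> - s + c * n)" by (rule det_Dm[OF n rs])
  moreover have "det (Dm n F \<mu> 0) = det (Gm n F \<mu>) * (\<mu> - s + (0::real) * n)" by (rule det_Dm[OF n rs])
  ultimately show ?thesis unfolding e1 e2 by simp
qed



definition av :: "(nat \<Rightarrow> nat \<Rightarrow> bool) \<Rightarrow> nat \<Rightarrow> nat \<Rightarrow> real" where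
  "av E i j = (if E i j then 1 else 0)"

lemma adj_av: "adj_matrix n E = mat n n (\<lambda>(i,j). av E i j)"
  unfolding adj_matrix_def av_def by simp

lemma sum_ind_card: "finite A \<Longrightarrow> (\<Sum>j\<in>A. if P j then (1::real) else 0) = real (card {j\<in>A. P j})"
  by (simp add: sum.If_cases Int_def)

lemma av_rowsum:
  assumes "regular_graph n E s" "i < n"
  shows "(\<Sum>j<n. av E i j) = real s"
proof -
  have "(\<Sum>j<n. av E i j) = real (card {j\<in>{..<n}. E i j})" unfolding av_def by (rule sum_ind_card) auto
  also have "{j\<in>{..<n}. E i j} = {w. w < n \<and> E i w}" by auto
  finally show ?thesis using assms unfolding regular_graph_def by simp
qed

lemma av_sym:
  assumes "regular_graph n E s"
  shows "av E i j = av E j i"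
  using assms unfolding regular_graph_def simple_graph_def av_def by metis

lemma av_nonneg: "av E i j \<ge> 0" unfolding av_def by simp

lemma charpoly_nz: "char_poly (mat n n (\<lambda>(i,j). F i j)) \<noteq> (0::real poly)"
proof -
  have "coeff (char_poly (mat n n (\<lambda>(i,j). F i j))) n = 1"
    using degree_monic_char_poly[of "mat n n (\<lambda>(i,j). F i j)" n] by auto
  thus ?thesis by auto
qed

lemma root_le_s:
  assumes reg: "regular_graph n E s"
    and r: "poly (char_poly (mat n n (\<lambda>(i,j). av E i j))) \<mu> = 0"
  shows "\<mu> \<le> real s"
proof -
  let ?M = "mat n n (\<lambda>(i,j). (if i = j then \<mu> else 0) - av E i j)"
  have "det ?M = 0" using r unfolding char_poly_eval .
  then obtain v where v: "v \<in> carrier_vec n" "v \<noteq> 0\<^sub>v n" "?M *\<^sub>v v = 0\<^sub>v n"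
    using det_0_iff_vec_prod_zero_field[of ?M n] by auto
  have ev: "\<mu> * v $ i = (\<Sum>j<n. av E i j * v $ j)" if "i < n" for i
  proof -
    have z: "(?M *\<^sub>v v) $ i = 0" using v that by simp
    have "(?M *\<^sub>v v) $ i = (\<Sum>j<n. ((if i = j then \<mu> else 0) - av E i j) * v $ j)"
      using v(1) that by (simp add: scalar_prod_def lessThan_atLeast0)
    hence "(\<Sum>j<n. ((if i = j then \<mu> else 0) - av E i j) * v $ j) = 0" using z by simp
    moreover have "(\<Sum>j<n. ((if i = j then \<mu> else 0) - av E i j) * v $ j)
       = (\<Sum>j<n. (if i = j then \<mu> * v $ j else 0)) - (\<Sum>j<n. av E i j * v $ j)"
      unfolding sum_subtractf[symmetric] by (intro sum.cong) (auto simp: left_diff_distrib)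
    ultimately have "(\<Sum>j<n. (if i = j then \<mu> * v $ j else 0)) - (\<Sum>j<n. av E i j * v $ j) = 0"
      by simp
    thus ?thesis using that by simp
  qed
  have "\<exists>j<n. v $ j \<noteq> 0"
  proof (rule ccontr)
    assume "\<not> ?thesis"
    hence "v = 0\<^sub>v n" using v(1) by (intro eq_vecI) auto
    thus False using v(2) by simp
  qed
  then obtain j0 where j0: "j0 < n" "v $ j0 \<noteq> 0" by blast
  define m where "m = Max ((\<lambda>j. \<bar>v $ j\<bar>) ` {..<n})"
  have fin: "finite ((\<lambda>j. \<bar>v $ j\<bar>) ` {..<n})" "(\<lambda>j. \<bar>v $ j\<bar>) ` {..<n} \<noteq> {}" using j0 by auto
  have mge: "\<bar>v $ j\<bar> \<le> m" if "j < n" for j unfolding m_def using fin that by (intro Max_ge) auto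
  obtain i where i: "i < n" "\<bar>v $ i\<bar> = m" using Max_in[OF fin] unfolding m_def by auto
  have mpos: "m > 0" using mge[OF j0(1)] j0 by linarith
  have "\<bar>\<mu>\<bar> * m = \<bar>\<Sum>j<n. av E i j * v $ j\<bar>" using ev[OF i(1)] i(2) by (metis abs_mult)
  also have "\<dots> \<le> (\<Sum>j<n. \<bar>av E i j * v $ j\<bar>)" by (rule sum_abs)
  also have "\<dots> \<le> (\<Sum>j<n. av E i j * m)"
    by (intro sum_mono) (simp add: abs_mult av_nonneg mge mult_left_mono)
  also have "\<dots> = real s * m" using av_rowsum[OF reg i(1)] by (simp add: sum_distrib_right[symmetric])
  finally have "\<bar>\<mu>\<bar> \<le> real s" using mpos by simp
  thus ?thesis by linarith
qed

lemma s_root: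
  assumes reg: "regular_graph n E s" and n: "n > 0"
  shows "poly (char_poly (mat n n (\<lambda>(i,j). av E i j))) (real s) = 0"
proof -
  let ?M = "mat n n (\<lambda>(i,j). (if i = j then real s else 0) - av E i j)"
  let ?v = "vec n (\<lambda>_. 1::real)"
  have "?M *\<^sub>v ?v = 0\<^sub>v n"
  proof (rule eq_vecI)
    fix i assume "i < dim_vec (0\<^sub>v n :: real vec)"
    hence i: "i < n" by simp
    have "(?M *\<^sub>v ?v) $ i = (\<Sum>j<n. (if i = j then real s else 0) - av E i j)"
      using i by (simp add: scalar_prod_def lessThan_atLeast0)
    also have "\<dots> = 0" using i av_rowsum[OF reg i] by (simp add: sum_subtractf)
    finally show "(?M *\<^sub>v ?v) $ i = (0\<^sub>v n :: real vec) $ i" using i by simp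
  qed simp
  moreover have "?v \<noteq> 0\<^sub>v n" using n by (metis index_vec index_zero_vec(1) zero_neq_one)
  moreover have "?v \<in> carrier_vec n" by simp
  moreover have cM: "?M \<in> carrier_mat n n" by simp
  ultimately have "det ?M = 0" using det_0_iff_vec_prod_zero_field[OF cM] by blast
  thus ?thesis unfolding char_poly_eval .
qed



abbreviation chiA where "chiA n E \<equiv> char_poly (mat n n (\<lambda>(i,j). av E i j))"
definition chiC where "chiC n E s t = char_poly (mat n n (\<lambda>(i,j). av E i j - (real s - t) / real n))"

lemma poly_id:
  assumes reg: "regular_graph n E s" and n: "n > 0"
  shows "chiC n E s t * [:- real s, 1:] = chiA n E * [:- t, 1:]"
proof -
  have "poly (chiC n E s t * [:- real s, 1:]) \<mu> = poly (chiA n E * [:- t, 1:]) \<mu>" for \<mu>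
  proof -
    have "poly (chiC n E s t * [:- real s, 1:]) \<mu>
        = det (mat n n (\<lambda>(i,j). (if i = j then \<mu> else 0) - (av E i j - (real s - t) / real n))) * (\<mu> - real s)"
      unfolding chiC_def poly_mult char_poly_eval by simp
    also have "\<dots> = det (mat n n (\<lambda>(i,j). (if i = j then \<mu> else 0) - av E i j)) * (\<mu> - real s + (real s - t) / real n * n)"
      by (rule det_identity[OF n av_rowsum[OF reg]])
    also have "\<dots> = poly (chiA n E * [:- t, 1:]) \<mu>"
      unfolding poly_mult char_poly_eval using n by simp
    finally show ?thesis .
  qed
  hence "poly (chiC n E s t * [:- real s, 1:]) = poly (chiA n E * [:- t, 1:])" by auto
  thus ?thesis by (simp add: poly_eq_poly_eq_iff)
qed

lemma proots_rel:
  assumes reg: "regular_graph n E s" and n: "n > 0"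
  shows "proots (chiC n E s t) + {#real s#} = proots (chiA n E) + {#t#}"
proof -
  have nz1: "chiC n E s t \<noteq> 0" unfolding chiC_def by (rule charpoly_nz)
  have nz2: "chiA n E \<noteq> 0" by (rule charpoly_nz)
  have "proots (chiC n E s t * [:- real s, 1:]) = proots (chiA n E * [:- t, 1:])"
    using poly_id[OF reg n] by (rule arg_cong)
  moreover have "proots (chiC n E s t * [:- real s, 1:]) = proots (chiC n E s t) + {#real s#}"
    by (subst proots_mult) (use nz1 in auto)
  moreover have "proots (chiA n E * [:- t, 1:]) = proots (chiA n E) + {#t#}"
    by (subst proots_mult) (use nz2 in auto)
  ultimately show ?thesis by simp
qed

lemma qf_shift: "qf n (\<lambda>i j. F i j - c) y = qf n F y - c * (\<Sum>i<n. y i)^2"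
proof -
  have "qf n (\<lambda>i j. F i j - c) y = qf n F y - c * (\<Sum>i<n. \<Sum>j<n. y i * y j)"
    unfolding qf_def by (simp add: algebra_simps sum_subtractf sum_distrib_left)
  also have "(\<Sum>i<n. \<Sum>j<n. y i * y j) = (\<Sum>i<n. y i)^2"
    by (simp add: power2_eq_square sum_product)
  finally show ?thesis .
qed

lemma root_exists:
  assumes reg: "regular_graph n E s" and n: "n > 0"
    and y0: "(\<Sum>i<n. y i) = 0" and q: "qf n (av E) y > t * nrm n y"
  shows "\<exists>\<mu>>t. \<mu> \<in># proots (chiC n E s t)"
proof -
  let ?F = "\<lambda>i j. av E i j - (real s - t) / real n"
  have sym: "\<And>i j. i < n \<Longrightarrow> j < n \<Longrightarrow> ?F i j = ?F j i" using av_sym[OF reg] by simp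
  have "qf n ?F y = qf n (av E) y" unfolding qf_shift y0 by simp
  with q have "qf n ?F y > t * nrm n y" by simp
  from claimR[OF sym this] obtain \<mu> where mu: "\<mu> > t"
    and d: "det (mat n n (\<lambda>(i,j). (if i = j then \<mu> else 0) - ?F i j)) = 0" by blast
  have "poly (chiC n E s t) \<mu> = 0" unfolding chiC_def char_poly_eval using d .
  moreover have "chiC n E s t \<noteq> 0" unfolding chiC_def by (rule charpoly_nz)
  ultimately have "\<mu> \<in># proots (chiC n E s t)" by simp
  with mu show ?thesis by blast
qed



lemma qf_lower: "qf n F y \<ge> - (\<Sum>i<n. \<Sum>j<n. \<bar>F i j\<bar>) * nrm n y"
proof -
  have "(\<Sum>i<n. \<Sum>j<n. - \<bar>F i j\<bar> * nrm n y) \<le> qf n F y"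
    unfolding qf_def
  proof (intro sum_mono)
    fix i j assume "i \<in> {..<n}" "j \<in> {..<n}"
    hence "\<bar>y i * y j\<bar> \<le> nrm n y" using prod_bound by auto
    hence "\<bar>F i j * (y i * y j)\<bar> \<le> \<bar>F i j\<bar> * nrm n y" by (simp add: abs_mult mult_left_mono)
    thus "- \<bar>F i j\<bar> * nrm n y \<le> F i j * y i * y j" by (simp add: mult.assoc)
  qed
  thus ?thesis by (simp add: sum_distrib_right sum_negf)
qed

lemma size_two:
  assumes "a \<in># M" "b \<in># M" "a \<noteq> b"
  shows "size M \<ge> 2"
proof -
  obtain xs where xs: "mset xs = M" using ex_mset by blast
  have "{a,b} \<subseteq> set xs" using assms xs by auto
  hence "card {a,b} \<le> card (set xs)" by (intro card_mono) auto
  also have "\<dots> \<le> length xs" by (rule card_length)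
  finally show ?thesis using assms xs by auto
qed

lemma spectral:
  assumes reg: "regular_graph n E s" and n2: "n \<ge> 2"
  shows "lambda2 n E \<le> real s \<and> (\<forall>y. (\<Sum>i<n. y i) = 0 \<longrightarrow> qf n (av E) y \<le> lambda2 n E * nrm n y)"
proof -
  have n: "n > 0" using n2 by simp
  define PA where "PA = proots (chiA n E)"
  define l where "l = sorted_list_of_multiset PA"
  define m where "m = length l"
  have ml: "mset l = PA" unfolding l_def by simp
  have srt: "sorted l" unfolding l_def by simp
  have msz: "m = size PA" unfolding m_def ml[symmetric] by simp
  have nzA: "chiA n E \<noteq> 0" by (rule charpoly_nz)
  have "set l = set_mset PA" unfolding ml[symmetric] by simp
  also have "\<dots> = {x. poly (chiA n E) x = 0}" unfolding PA_def using nzA by simp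
  finally have setl: "set l = {x. poly (chiA n E) x = 0}" .
  have le_s: "x \<le> real s" if "x \<in> set l" for x using that setl root_le_s[OF reg] by auto
  have s_in: "real s \<in> set l" using setl s_root[OF reg n] by auto
  have "m \<ge> 2"
  proof -
    define K where "K = (\<Sum>i<n. \<Sum>j<n. \<bar>av E i j\<bar>)"
    have K0: "K \<ge> 0" unfolding K_def by (intro sum_nonneg) auto
    define t0 where "t0 = - K - 1"
    define y0 where "y0 = (\<lambda>i::nat. (if i = 0 then 1 else 0) - (if i = 1 then 1 else (0::real)))"
    have sy: "(\<Sum>i<n. y0 i) = 0" unfolding y0_def using n2 by (simp add: sum_subtractf)
    have "(y0 0)^2 \<le> nrm n y0" using n by (intro nrm_ge)
    hence ny: "nrm n y0 \<ge> 1" unfolding y0_def by simp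
    have "qf n (av E) y0 \<ge> - K * nrm n y0" unfolding K_def by (rule qf_lower)
    moreover have "- K * nrm n y0 > t0 * nrm n y0" unfolding t0_def using ny by (simp add: algebra_simps)
    ultimately have "qf n (av E) y0 > t0 * nrm n y0" by linarith
    from root_exists[OF reg n sy this] obtain \<mu> where mu: "\<mu> > t0" "\<mu> \<in># proots (chiC n E s t0)" by blast
    have rel: "proots (chiC n E s t0) + {#real s#} = PA + {#t0#}" unfolding PA_def by (rule proots_rel[OF reg n])
    have "t0 \<noteq> real s" unfolding t0_def using K0 by simp
    hence "count (proots (chiC n E s t0)) t0 \<ge> 1"
      using arg_cong[OF rel, of "\<lambda>M. count M t0"] by simp
    hence "t0 \<in># proots (chiC n E s t0)" by (simp add: Suc_le_eq)
    with mu have "size (proots (chiC n E s t0)) \<ge> 2" by (intro size_two[of \<mu> _ t0]) auto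
    moreover have "size (proots (chiC n E s t0)) = size PA"
      using arg_cong[OF rel, of size] by simp
    ultimately show ?thesis using msz by simp
  qed
  hence lne: "l \<noteq> []" unfolding m_def by auto
  have last_s: "last l = real s"
  proof -
    obtain i where i: "i < m" "l ! i = real s" using s_in unfolding m_def by (auto simp: in_set_conv_nth)
    have "l ! i \<le> l ! (m - 1)" using i srt by (intro sorted_nth_mono) (auto simp: m_def)
    moreover have "l ! (m - 1) \<le> real s" using le_s \<open>m \<ge> 2\<close> unfolding m_def by auto
    ultimately show ?thesis using i lne by (simp add: last_conv_nth m_def)
  qed
  have lam: "lambda2 n E = l ! (m - 2)"
    unfolding lambda2_def adj_eigenvalues_desc_def adj_av l_def[symmetric] PA_def[symmetric]
    using \<open>m \<ge> 2\<close> by (simp add: rev_nth m_def numeral_2_eq_2)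
  have bl: "x \<le> l ! (m - 2)" if xin: "x \<in> set (butlast l)" for x
  proof -
    obtain i where i: "i < length (butlast l)" "butlast l ! i = x" using xin by (auto simp: in_set_conv_nth)
    hence "x = l ! i" by (simp add: nth_butlast)
    moreover have "l ! i \<le> l ! (m - 2)" using i srt \<open>m \<ge> 2\<close> by (intro sorted_nth_mono) (auto simp: m_def)
    ultimately show ?thesis by simp
  qed
  have mbl: "mset (butlast l) + {#real s#} = PA"
  proof -
    have "l = butlast l @ [last l]" using lne by simp
    hence "mset l = mset (butlast l @ [last l])" by simp
    hence "mset l = mset (butlast l) + {#last l#}" by simp
    thus ?thesis using ml last_s by simp
  qed
  have "lambda2 n E \<le> real s" unfolding lam using le_s \<open>m \<ge> 2\<close> unfolding m_def by auto
  moreover have "qf n (av E) y \<le> lambda2 n E * nrm n y" if y0: "(\<Sum>i<n. y i) = 0" for y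
  proof (rule ccontr)
    assume "\<not> ?thesis"
    hence "qf n (av E) y > lambda2 n E * nrm n y" by simp
    from root_exists[OF reg n y0 this] obtain \<mu> where mu: "\<mu> > lambda2 n E" "\<mu> \<in># proots (chiC n E s (lambda2 n E))" by blast
    have rel: "proots (chiC n E s (lambda2 n E)) + {#real s#} = PA + {#lambda2 n E#}" unfolding PA_def by (rule proots_rel[OF reg n])
    have "count (proots (chiC n E s (lambda2 n E))) \<mu> + count {#real s#} \<mu> = count PA \<mu>"
      using arg_cong[OF rel, of "\<lambda>M. count M \<mu>"] mu(1) by (auto split: if_splits)
    moreover have "count (mset (butlast l)) \<mu> + count {#real s#} \<mu> = count PA \<mu>"
      using arg_cong[OF mbl, of "\<lambda>M. count M \<mu>"] by (auto split: if_splits)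
    ultimately have "count (mset (butlast l)) \<mu> = count (proots (chiC n E s (lambda2 n E))) \<mu>" by simp
    hence "count (mset (butlast l)) \<mu> > 0" using mu(2) by (simp add: count_greater_zero_iff)
    hence "\<mu> \<in># mset (butlast l)" by (simp only: count_greater_zero_iff)
    hence "\<mu> \<in> set (butlast l)" by simp
    hence "\<mu> \<le> lambda2 n E" using bl lam by simp
    thus False using mu(1) by simp
  qed
  ultimately show ?thesis by blast
qed



lemma card_delta:
  assumes sg: "simple_graph n E" and S: "S \<subseteq> {0..<n}" and v: "v \<in> S"
  shows "card (delta_set n E S \<inter> delta_vertex n E v) = card {w. w < n \<and> w \<notin> S \<and> E v w}"
proof -
  have sym: "\<And>u w. E u w \<Longrightarrow> E w u" using sg unfolding simple_graph_def by blast
  have vn: "v < n" using S v by auto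
  have img: "(\<lambda>w. {v, w}) ` {w. w < n \<and> w \<notin> S \<and> E v w} = delta_set n E S \<inter> delta_vertex n E v"
  proof
    show "(\<lambda>w. {v, w}) ` {w. w < n \<and> w \<notin> S \<and> E v w} \<subseteq> delta_set n E S \<inter> delta_vertex n E v"
    proof
      fix e assume "e \<in> (\<lambda>w. {v, w}) ` {w. w < n \<and> w \<notin> S \<and> E v w}"
      then obtain w where w: "w < n" "w \<notin> S" "E v w" "e = {v, w}" by blast
      have ge: "e \<in> graph_edges n E" unfolding graph_edges_def using w vn by blast
      have "e \<in> delta_set n E S" unfolding delta_set_def using ge w v by auto
      moreover have "e \<in> delta_vertex n E v" unfolding delta_vertex_def using ge w by auto
      ultimately show "e \<in> delta_set n E S \<inter> delta_vertex n E v" by blast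
    qed
  next
    show "delta_set n E S \<inter> delta_vertex n E v \<subseteq> (\<lambda>w. {v, w}) ` {w. w < n \<and> w \<notin> S \<and> E v w}"
    proof
      fix e assume e: "e \<in> delta_set n E S \<inter> delta_vertex n E v"
      then obtain u w where uw: "e = {u, w}" "u \<in> S" "w \<in> {0..<n} - S" unfolding delta_set_def by blast
      have "v \<in> e" using e unfolding delta_vertex_def by blast
      hence "v = u" using uw v by auto
      from e obtain u' w' where e': "e = {u', w'}" "E u' w'" unfolding delta_set_def graph_edges_def by blast
      have "E v w"
      proof -
        have "{u', w'} = {v, w}" using e' uw \<open>v = u\<close> by simp
        hence "(u' = v \<and> w' = w) \<or> (u' = w \<and> w' = v)" by (auto simp: doubleton_eq_iff)
        thus ?thesis using e'(2) sym by blast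
      qed
      thus "e \<in> (\<lambda>w. {v, w}) ` {w. w < n \<and> w \<notin> S \<and> E v w}" using uw \<open>v = u\<close> by auto
    qed
  qed
  have "inj_on (\<lambda>w. {v, w}) {w. w < n \<and> w \<notin> S \<and> E v w}"
    using v by (auto simp: inj_on_def doubleton_eq_iff)
  hence "card ((\<lambda>w. {v, w}) ` {w. w < n \<and> w \<notin> S \<and> E v w}) = card {w. w < n \<and> w \<notin> S \<and> E v w}"
    by (rule card_image)
  thus ?thesis using img by simp
qed

lemma sumS:
  fixes S :: "nat set" and n :: nat
  assumes "S \<subseteq> {0..<n}"
  shows "(\<Sum>i<n. (if i \<in> S then (1::real) else 0) * f i) = (\<Sum>i\<in>S. f i)"
proof -
  have "(\<Sum>i<n. (if i \<in> S then (1::real) else 0) * f i) = (\<Sum>i<n. if i \<in> S then f i else 0)"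
    by (intro sum.cong) auto
  also have "\<dots> = sum f ({..<n} \<inter> S)" using sum.inter_restrict[of "{..<n}" f S] by simp
  also have "{..<n} \<inter> S = S" using assms by auto
  finally show ?thesis .
qed



lemma indicator_facts:
  fixes S :: "nat set"
  assumes reg: "regular_graph n E s" and S: "S \<subseteq> {0..<n}" and n: "n > 0"
  defines "k \<equiv> real (card S)"
  defines "y \<equiv> (\<lambda>i. (if i \<in> S then 1 else 0) - k / real n)"
  defines "d \<equiv> (\<lambda>v. real (card {w. w < n \<and> w \<notin> S \<and> E v w}))"
  shows "(\<Sum>i<n. y i) = 0" "nrm n y = k - k^2 / real n"
    "qf n (av E) y = real s * k - (\<Sum>v\<in>S. d v) - real s * k^2 / real n"
proof -
  define p where "p = k / real n"
  define \<chi> where "\<chi> = (\<lambda>i. if i \<in> S then (1::real) else 0)"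
  have y: "y = (\<lambda>i. \<chi> i - p)" unfolding y_def \<chi>_def p_def by simp
  have sumchi: "(\<Sum>i<n. \<chi> i * f i) = (\<Sum>i\<in>S. f i)" for f unfolding \<chi>_def using sumS[OF S] .
  have sc: "(\<Sum>i<n. \<chi> i) = k" using sumchi[of "\<lambda>_. 1"] unfolding k_def by simp
  have np: "real n * p = k" unfolding p_def using n by simp
  show "(\<Sum>i<n. y i) = 0" unfolding y using sc np by (simp add: sum_subtractf)
  have chi2: "\<chi> i * \<chi> i = \<chi> i" for i unfolding \<chi>_def by simp
  have "nrm n y = (\<Sum>i<n. \<chi> i - 2 * p * \<chi> i + p^2)"
    unfolding nrm_def y by (intro sum.cong refl) (simp add: power2_eq_square algebra_simps chi2)
  also have "\<dots> = k - 2 * p * k + real n * p^2"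
    by (simp add: sum.distrib sum_subtractf sum_distrib_left[symmetric] sc)
  also have "\<dots> = k - k^2 / real n" unfolding p_def using n by (simp add: field_simps power2_eq_square)
  finally show "nrm n y = k - k^2 / real n" .
  let ?a = "av E"
  have rs: "(\<Sum>j<n. ?a i j) = real s" if "i < n" for i using av_rowsum[OF reg that] .
  have T1: "(\<Sum>i<n. \<Sum>j<n. ?a i j * \<chi> i * \<chi> j) = real s * k - (\<Sum>v\<in>S. d v)"
  proof -
    have "(\<Sum>i<n. \<Sum>j<n. ?a i j * \<chi> i * \<chi> j) = (\<Sum>i<n. \<chi> i * (\<Sum>j<n. \<chi> j * ?a i j))"
      by (simp add: sum_distrib_left mult_ac)
    also have "\<dots> = (\<Sum>i\<in>S. (\<Sum>j\<in>S. ?a i j))" by (simp add: sumchi)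
    also have "\<dots> = (\<Sum>i\<in>S. real s - d i)"
    proof (intro sum.cong refl)
      fix i assume i: "i \<in> S"
      hence "i < n" using S by auto
      have fS: "finite S" using S finite_subset by blast
      have "(\<Sum>j\<in>S. ?a i j) = real (card {j\<in>S. E i j})"
        unfolding av_def using fS by (rule sum_ind_card)
      moreover have "card {w. w < n \<and> E i w} = card {j\<in>S. E i j} + card {w. w < n \<and> w \<notin> S \<and> E i w}"
      proof -
        have "{w. w < n \<and> E i w} = {j\<in>S. E i j} \<union> {w. w < n \<and> w \<notin> S \<and> E i w}" using S by auto
        moreover have "finite {j\<in>S. E i j}" using fS by simp
        moreover have "finite {w. w < n \<and> w \<notin> S \<and> E i w}" by simp
        ultimately show ?thesis by (simp add: card_Un_disjoint disjoint_iff)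
      qed
      moreover have "card {w. w < n \<and> E i w} = s" using reg \<open>i < n\<close> unfolding regular_graph_def by simp
      ultimately show "(\<Sum>j\<in>S. ?a i j) = real s - d i" unfolding d_def by simp
    qed
    also have "\<dots> = real s * k - (\<Sum>v\<in>S. d v)" by (simp add: sum_subtractf k_def)
    finally show ?thesis .
  qed
  have T2: "(\<Sum>i<n. \<Sum>j<n. ?a i j * \<chi> i) = real s * k"
  proof -
    have "(\<Sum>i<n. \<Sum>j<n. ?a i j * \<chi> i) = (\<Sum>i<n. \<chi> i * (\<Sum>j<n. ?a i j))"
      by (simp add: sum_distrib_left mult_ac)
    also have "\<dots> = (\<Sum>i<n. \<chi> i * real s)" using rs by simp
    also have "\<dots> = real s * k" using sc by (simp add: sum_distrib_left[symmetric] mult_ac)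
    finally show ?thesis .
  qed
  have T3: "(\<Sum>i<n. \<Sum>j<n. ?a i j * \<chi> j) = real s * k"
  proof -
    have "(\<Sum>i<n. \<Sum>j<n. ?a i j * \<chi> j) = (\<Sum>j<n. \<Sum>i<n. ?a i j * \<chi> j)" by (rule sum.swap)
    also have "\<dots> = (\<Sum>j<n. \<Sum>i<n. ?a j i * \<chi> j)" using av_sym[OF reg] by simp
    also have "\<dots> = real s * k" using T2 .
    finally show ?thesis .
  qed
  have T4: "(\<Sum>i<n. \<Sum>j<n. ?a i j) = real n * real s" using rs by simp
  have "qf n ?a y = (\<Sum>i<n. \<Sum>j<n. ?a i j * \<chi> i * \<chi> j - p * (?a i j * \<chi> i) - p * (?a i j * \<chi> j) + p^2 * ?a i j)"
    unfolding qf_def y by (intro sum.cong refl) (simp add: algebra_simps power2_eq_square)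
  also have "\<dots> = (\<Sum>i<n. \<Sum>j<n. ?a i j * \<chi> i * \<chi> j) - p * (\<Sum>i<n. \<Sum>j<n. ?a i j * \<chi> i)
      - p * (\<Sum>i<n. \<Sum>j<n. ?a i j * \<chi> j) + p^2 * (\<Sum>i<n. \<Sum>j<n. ?a i j)"
    by (simp add: sum.distrib sum_subtractf sum_distrib_left)
  also have "\<dots> = real s * k - (\<Sum>v\<in>S. d v) - real s * k^2 / real n"
    unfolding T1 T2 T3 T4 p_def using n by (simp add: field_simps power2_eq_square)
  finally show "qf n (av E) y = real s * k - (\<Sum>v\<in>S. d v) - real s * k^2 / real n" .
qed



theorem mainTheorem7:
  fixes n s :: nat and E :: "nat \<Rightarrow> nat \<Rightarrow> bool" and S :: "nat set" and \<alpha> b :: real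
  assumes "regular_graph n E s"
    and "0 < \<alpha>"
    and "S \<subseteq> {0..<n}"
    and "real (card S) \<le> \<alpha> * real n"
    and "0 < b" and "b \<le> real s"
  shows "let A = {v \<in> S. real (card (delta_set n E S \<inter> delta_vertex n E v)) \<ge> real s - b};
             \<beta> = ((b - lambda2 n E) - \<alpha> * (real s - lambda2 n E)) / b
         in real (card A) \<ge> \<beta> * real (card S)"
proof -
  note reg = assms(1) and Ssub = assms(3) and kle = assms(4) and bpos = assms(5) and bs = assms(6)
  define A where "A = {v \<in> S. real (card (delta_set n E S \<inter> delta_vertex n E v)) \<ge> real s - b}"
  define \<beta> where "\<beta> = ((b - lambda2 n E) - \<alpha> * (real s - lambda2 n E)) / b"
  have fS: "finite S" using Ssub finite_subset by blast
  have "real (card A) \<ge> \<beta> * real (card S)"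
  proof (cases "card S = 0")
    case True thus ?thesis by simp
  next
    case False
    hence Sne: "S \<noteq> {}" by auto
    then obtain v0 where "v0 \<in> S" by blast
    hence n: "n > 0" using Ssub by fastforce
    have sg: "simple_graph n E" using reg unfolding regular_graph_def by simp
    have "card {w. w < n \<and> E 0 w} = s" using reg n unfolding regular_graph_def by blast
    hence "{w. w < n \<and> E 0 w} \<noteq> {}"
    proof (intro notI)
      assume "card {w. w < n \<and> E 0 w} = s" "{w. w < n \<and> E 0 w} = {}"
      hence "s = 0" by simp
      thus False using bs bpos by simp
    qed
    then obtain w where w: "w < n" "E 0 w" by blast
    have "\<not> E 0 0" using sg unfolding simple_graph_def by blast
    have "w \<noteq> 0"
    proof
      assume "w = 0" thus False using w \<open>\<not> E 0 0\<close> by simp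
    qed
    hence n2: "n \<ge> 2" using w by linarith
    define d where "d = (\<lambda>v. real (card {w. w < n \<and> w \<notin> S \<and> E v w}))"
    define k where "k = real (card S)"
    define y where "y = (\<lambda>i. (if i \<in> S then 1 else 0) - k / real n)"
    define D where "D = (\<Sum>v\<in>S. d v)"
    define L where "L = lambda2 n E"
    have Aeq: "A = {v \<in> S. d v \<ge> real s - b}"
      unfolding A_def d_def using card_delta[OF sg Ssub] by auto
    have spec: "L \<le> real s" "\<And>y. (\<Sum>i<n. y i) = 0 \<Longrightarrow> qf n (av E) y \<le> L * nrm n y"
      using spectral[OF reg n2] unfolding L_def by auto
    have f1: "(\<Sum>i<n. y i) = 0" "nrm n y = k - k^2 / real n"
      "qf n (av E) y = real s * k - D - real s * k^2 / real n"
      using indicator_facts[OF reg Ssub n] unfolding y_def k_def D_def d_def by auto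
    have ineq1: "real s * k - D - real s * k^2 / real n \<le> L * (k - k^2 / real n)"
      using spec(2)[OF f1(1)] unfolding f1(2) f1(3) .
    have dle: "d v \<le> real s" if "v \<in> S" for v
    proof -
      have "v < n" using that Ssub by auto
      have "card {w. w < n \<and> w \<notin> S \<and> E v w} \<le> card {w. w < n \<and> E v w}"
        by (intro card_mono) auto
      also have "\<dots> = s" using reg \<open>v < n\<close> unfolding regular_graph_def by simp
      finally show ?thesis unfolding d_def by simp
    qed
    have AS: "A \<subseteq> S" unfolding Aeq by auto
    have fA: "finite A" using AS fS finite_subset by blast
    have "D = (\<Sum>v\<in>A. d v) + (\<Sum>v\<in>S - A. d v)"
      unfolding D_def using sum.subset_diff[OF AS fS, of d] by (simp add: add.commute)
    also have "(\<Sum>v\<in>A. d v) \<le> (\<Sum>v\<in>A. real s)" using AS dle by (intro sum_mono) auto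
    also have "(\<Sum>v\<in>S - A. d v) \<le> (\<Sum>v\<in>S - A. real s - b)"
      by (intro sum_mono) (auto simp: Aeq)
    finally have "D \<le> real (card A) * real s + real (card (S - A)) * (real s - b)" by simp
    moreover have "real (card (S - A)) = k - real (card A)"
      unfolding k_def using card_Diff_subset[OF fA AS] card_mono[OF fS AS] by simp
    ultimately have ineq2: "D \<le> (real s - b) * k + b * real (card A)" by (simp add: algebra_simps)
    have kpos: "k \<ge> 0" unfolding k_def by simp
    have ineq3: "k^2 / real n \<le> \<alpha> * k"
    proof -
      have "k * k \<le> (\<alpha> * real n) * k" using kle kpos unfolding k_def by (intro mult_right_mono) auto
      thus ?thesis using n by (simp add: field_simps power2_eq_square)
    qed
    have sL: "real s - L \<ge> 0" using spec(1) by simp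
    have "(real s - L) * (k - \<alpha> * k) \<le> (real s - L) * (k - k^2 / real n)"
      using sL ineq3 by (intro mult_left_mono) auto
    also have "(real s - L) * (k - k^2 / real n) \<le> D"
    proof -
      have "(real s - L) * (k - k^2 / real n) = real s * k - real s * k^2 / real n - L * (k - k^2 / real n)"
        by (simp add: left_diff_distrib right_diff_distrib diff_divide_distrib)
      thus ?thesis using ineq1 by linarith
    qed
    finally have "(real s - L) * (k - \<alpha> * k) - (real s - b) * k \<le> b * real (card A)" using ineq2 by linarith
    moreover have "(real s - L) * (k - \<alpha> * k) - (real s - b) * k = (\<beta> * k) * b"
      unfolding \<beta>_def L_def using bpos by (simp add: field_simps)
    ultimately have "(\<beta> * k) * b \<le> real (card A) * b" by (simp add: mult.commute)
    hence "\<beta> * k \<le> real (card A)" using bpos by simp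
    thus ?thesis unfolding k_def .
  qed
  thus ?thesis unfolding A_def \<beta>_def Let_def .
qed

end
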